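(* Let $G=(V,E)$ be an undirected weighted graph in which shortest paths are unique. Let $u,v\in V$, let $D\subseteq E$ be a set of $d$ edges such that $u$ and $v$ are connected in $G-D$, and let $r=\mathrm{rank}_{G-D}(u,v)$. Suppose $w$ is a vertex on $\pi_{G-D}(u,v)$ such that both $\pi(u,w)$ and $\pi(w,v)$ contain an edge of $D$. Then $\mathrm{rank}_{G-D}(u,w)\le r-1$ and $\mathrm{rank}_{G-D}(w,v)\le r-1$.
   Context: For $D\subseteq E$, $G-D$ is $G$ with the edges of $D$ removed. For a graph $H$ and vertices $a,b$, $\pi_H(a,b)$ denotes the (unique) shortest path from $a$ to $b$ in $H$, regarded as a directed path from $a$ to $b$; $\pi(a,b)=\pi_G(a,b)$. A path is $k$-decomposable if it is the concatenation of at most $k+1$ shortest paths in $G$, interleaved with at most $k$ edges. $\mathrm{rank}_{G-D}(a,b)$ is the smallest integer $i\ge 0$ such that $\pi_{G-D}(a,b)$ is an $i$-decomposable path. *)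

theory Defs
  imports Complex_Main
begin

definition graph :: "'v set \<Rightarrow> 'v set set \<Rightarrow> ('v set \<Rightarrow> real) \<Rightarrow> bool" where
  "graph V E wt \<longleftrightarrow> finite V \<and> E \<subseteq> {{a, b} | a b. a \<in> V \<and> b \<in> V \<and> a \<noteq> b}
     \<and> (\<forall>e\<in>E. wt e > 0)"

definition edges_of :: "'v list \<Rightarrow> 'v set set" where
  "edges_of p = set (map (\<lambda>(x, y). {x, y}) (zip p (tl p)))"

definition plen :: "('v set \<Rightarrow> real) \<Rightarrow> 'v list \<Rightarrow> real" where
  "plen wt p = sum_list (map (\<lambda>(x, y). wt {x, y}) (zip p (tl p)))"

definition is_path :: "'v set \<Rightarrow> 'v set set \<Rightarrow> 'v list \<Rightarrow> 'v \<Rightarrow> 'v \<Rightarrow> bool" where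
  "is_path V F p a b \<longleftrightarrow> p \<noteq> [] \<and> hd p = a \<and> last p = b \<and> distinct p
     \<and> set p \<subseteq> V \<and> edges_of p \<subseteq> F"

definition connected_in :: "'v set \<Rightarrow> 'v set set \<Rightarrow> 'v \<Rightarrow> 'v \<Rightarrow> bool" where
  "connected_in V F a b \<longleftrightarrow> (\<exists>p. is_path V F p a b)"

definition is_sp :: "'v set \<Rightarrow> 'v set set \<Rightarrow> ('v set \<Rightarrow> real) \<Rightarrow> 'v list \<Rightarrow> 'v \<Rightarrow> 'v \<Rightarrow> bool" where
  "is_sp V F wt p a b \<longleftrightarrow> is_path V F p a b \<and> (\<forall>q. is_path V F q a b \<longrightarrow> plen wt p \<le> plen wt q)"

definition unique_sp :: "'v set \<Rightarrow> 'v set set \<Rightarrow> ('v set \<Rightarrow> real) \<Rightarrow> bool" where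
  "unique_sp V F wt \<longleftrightarrow> (\<forall>a b p q. is_sp V F wt p a b \<longrightarrow> is_sp V F wt q a b \<longrightarrow> p = q)"

definition spath :: "'v set \<Rightarrow> 'v set set \<Rightarrow> ('v set \<Rightarrow> real) \<Rightarrow> 'v \<Rightarrow> 'v \<Rightarrow> 'v list" where
  "spath V F wt a b = (THE p. is_sp V F wt p a b)"

definition decomposable :: "'v set \<Rightarrow> 'v set set \<Rightarrow> ('v set \<Rightarrow> real) \<Rightarrow> nat \<Rightarrow> 'v list \<Rightarrow> bool" where
  "decomposable V E wt k P \<longleftrightarrow> (\<exists>segs. segs \<noteq> [] \<and> length segs \<le> k + 1 \<and> concat segs = P
     \<and> (\<forall>s\<in>set segs. s \<noteq> [] \<and> is_sp V E wt s (hd s) (last s))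
     \<and> (\<forall>i. Suc i < length segs \<longrightarrow> {last (segs ! i), hd (segs ! Suc i)} \<in> E))"

definition rank_GD :: "'v set \<Rightarrow> 'v set set \<Rightarrow> ('v set \<Rightarrow> real) \<Rightarrow> 'v set set \<Rightarrow> 'v \<Rightarrow> 'v \<Rightarrow> nat" where
  "rank_GD V E wt D a b = (LEAST i. decomposable V E wt i (spath V (E - D) wt a b))"

end

theory Submission imports Defs begin

lemma plen_simps[simp]: "plen wt [] = 0" "plen wt [x] = 0" "plen wt (x#y#r) = wt {x,y} + plen wt (y#r)"
  by (simp_all add: plen_def)
lemma edges_simps[simp]: "edges_of [] = {}" "edges_of [x] = {}" "edges_of (x#y#r) = insert {x,y} (edges_of (y#r))"
  by (simp_all add: edges_of_def)

lemma plen_append: "plen wt (xs @ x # ys) = plen wt (xs @ [x]) + plen wt (x # ys)"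
proof (induction xs)
  case (Cons a xs) then show ?case by (cases xs) auto
qed simp

lemma edges_append: "edges_of (xs @ x # ys) = edges_of (xs @ [x]) \<union> edges_of (x # ys)"
proof (induction xs)
  case (Cons a xs) then show ?case by (cases xs) auto
qed simp

lemma plen_nonneg: "edges_of p \<subseteq> F \<Longrightarrow> \<forall>e\<in>F. wt e \<ge> 0 \<Longrightarrow> plen wt p \<ge> 0"
  by (induction p rule: induct_list012) auto

lemma edge_nth: "Suc i < length p \<Longrightarrow> {p!i, p!Suc i} \<in> edges_of p"
proof (induction p arbitrary: i rule: induct_list012)
  case (3 x y zs)
  then show ?case by (cases i) auto
qed auto

lemma walk_to_path:
  assumes nn: "\<forall>e\<in>F. wt e \<ge> 0"
  shows "p \<noteq> [] \<Longrightarrow> set p \<subseteq> V \<Longrightarrow> edges_of p \<subseteq> F \<Longrightarrow>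
    \<exists>r. is_path V F r (hd p) (last p) \<and> plen wt r \<le> plen wt p"
proof (induction p rule: length_induct)
  case (1 p)
  show ?case
  proof (cases "distinct p")
    case True thus ?thesis using 1 by (auto simp: is_path_def)
  next
    case False
    then obtain xs ys zs y where p: "p = xs @ [y] @ ys @ [y] @ zs" using not_distinct_decomp by blast
    let ?p' = "xs @ y # zs"
    have e: "edges_of p = edges_of (xs@[y]) \<union> edges_of (y # ys @ [y]) \<union> edges_of (y#zs)"
      using edges_append[of xs y "ys @ y # zs"] edges_append[of "y#ys" y zs] p by auto
    have l: "plen wt p = plen wt (xs@[y]) + plen wt (y # ys @ [y]) + plen wt (y#zs)"
      using plen_append[of wt xs y "ys @ y # zs"] plen_append[of wt "y#ys" y zs] p by auto
    have e': "edges_of ?p' = edges_of (xs@[y]) \<union> edges_of (y#zs)" by (rule edges_append)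
    have l': "plen wt ?p' = plen wt (xs@[y]) + plen wt (y#zs)" by (rule plen_append)
    have "plen wt (y # ys @ [y]) \<ge> 0" using plen_nonneg[OF _ nn] e 1(4) by blast
    hence le: "plen wt ?p' \<le> plen wt p" using l l' by simp
    have hd: "hd ?p' = hd p" by (cases xs) (simp_all add: p)
    have lst: "last ?p' = last p" by (simp add: p)
    have "length ?p' < length p" by (simp add: p)
    moreover have "set ?p' \<subseteq> V" using 1(3) p by auto
    moreover have "edges_of ?p' \<subseteq> F" using 1(4) e e' by auto
    ultimately obtain r where "is_path V F r (hd ?p') (last ?p')" "plen wt r \<le> plen wt ?p'"
      using 1(1) by blast
    thus ?thesis using hd lst le by auto
  qed
qed

lemma sp_split:
  assumes sp: "is_sp V F wt (a @ w # b) x y" and nn: "\<forall>e\<in>F. wt e \<ge> 0"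
  shows "is_sp V F wt (a @ [w]) x w \<and> is_sp V F wt (w # b) w y"
proof -
  have P: "is_path V F (a @ w # b) x y" and mn: "\<And>q. is_path V F q x y \<Longrightarrow> plen wt (a @ w # b) \<le> plen wt q"
    using sp unfolding is_sp_def by auto
  have E: "edges_of (a @ w # b) = edges_of (a@[w]) \<union> edges_of (w#b)" by (rule edges_append)
  have L: "plen wt (a @ w # b) = plen wt (a@[w]) + plen wt (w#b)" by (rule plen_append)
  have hdeq: "hd (a@[w]) = hd (a @ w # b)" by (cases a) auto
  have p1: "is_path V F (a@[w]) x w" using P E hdeq by (auto simp: is_path_def)
  have p2: "is_path V F (w#b) w y" using P E by (auto simp: is_path_def)
  have m1: "plen wt (a@[w]) \<le> plen wt q" if q: "is_path V F q x w" for q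
  proof -
    from q obtain q' where q': "q = q' @ [w]" unfolding is_path_def by (metis append_butlast_last_id)
    have Eq: "edges_of (q' @ w # b) = edges_of (q'@[w]) \<union> edges_of (w#b)" by (rule edges_append)
    have Lq: "plen wt (q' @ w # b) = plen wt (q'@[w]) + plen wt (w#b)" by (rule plen_append)
    have h: "hd (q' @ w # b) = x" using q q' unfolding is_path_def by (cases q') auto
    have la: "last (q' @ w # b) = y" using P unfolding is_path_def by simp
    obtain r where r: "is_path V F r x y" "plen wt r \<le> plen wt (q' @ w # b)"
    proof -
      have "set (q' @ w # b) \<subseteq> V" using q q' P unfolding is_path_def by auto
      moreover have "edges_of (q' @ w # b) \<subseteq> F" using q q' P E Eq unfolding is_path_def by auto
      ultimately show ?thesis using walk_to_path[OF nn, of "q' @ w # b" V] h la that by auto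
    qed
    show ?thesis using mn[OF r(1)] r(2) L Lq q' by simp
  qed
  have m2: "plen wt (w#b) \<le> plen wt q" if q: "is_path V F q w y" for q
  proof -
    from q obtain q' where q': "q = w # q'" unfolding is_path_def by (metis list.collapse)
    have Eq: "edges_of (a @ w # q') = edges_of (a@[w]) \<union> edges_of (w#q')" by (rule edges_append)
    have Lq: "plen wt (a @ w # q') = plen wt (a@[w]) + plen wt (w#q')" by (rule plen_append)
    have h: "hd (a @ w # q') = x" using P unfolding is_path_def by (cases a) auto
    have la: "last (a @ w # q') = y" using q q' unfolding is_path_def by simp
    obtain r where r: "is_path V F r x y" "plen wt r \<le> plen wt (a @ w # q')"
    proof -
      have "set (a @ w # q') \<subseteq> V" using q q' P unfolding is_path_def by auto
      moreover have "edges_of (a @ w # q') \<subseteq> F" using q q' P E Eq unfolding is_path_def by auto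
      ultimately show ?thesis using walk_to_path[OF nn, of "a @ w # q'" V] h la that by auto
    qed
    show ?thesis using mn[OF r(1)] r(2) L Lq q' by simp
  qed
  show ?thesis using p1 p2 m1 m2 by (auto simp: is_sp_def)
qed

lemma sp_exists:
  assumes "finite V" "connected_in V F a b"
  shows "\<exists>p. is_sp V F wt p a b"
proof -
  let ?S = "{p. is_path V F p a b}"
  have "?S \<subseteq> {xs. set xs \<subseteq> V \<and> distinct xs}" by (auto simp: is_path_def)
  hence fin: "finite ?S" using finite_subset_distinct[OF assms(1)] finite_subset by blast
  have ne: "?S \<noteq> {}" using assms(2) by (auto simp: connected_in_def)
  obtain m where "m \<in> ?S" "\<not>(\<exists>x\<in>?S. plen wt x < plen wt m)"
    using arg_min_if_finite[OF fin ne, of "plen wt"] by blast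
  thus ?thesis unfolding is_sp_def by (metis mem_Collect_eq not_le)
qed

lemma concat_split:
  "concat segs = p1 @ w # p2 \<Longrightarrow> \<exists>j a b. j < length segs \<and> segs!j = a @ w # b \<and>
     p1 = concat (take j segs) @ a \<and> p2 = b @ concat (drop (Suc j) segs)"
proof (induction segs arbitrary: p1)
  case Nil then show ?case by simp
next
  case (Cons s ss)
  have eq: "s @ concat ss = p1 @ w # p2" using Cons.prems by simp
  show ?case
  proof (cases "length p1 < length s")
    case True
    have "s = p1 @ w # drop (Suc (length p1)) s"
      using eq True by (metis Cons_nth_drop_Suc append_eq_append_conv_if drop_eq_Nil2
        id_take_nth_drop list.distinct(1) nth_append_left nth_append_length)
    then obtain d where s: "s = p1 @ w # d" by blast
    have "p2 = d @ concat ss" using eq unfolding s by simp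
    hence "(0::nat) < length (s # ss) \<and> (s # ss) ! 0 = p1 @ w # d \<and>
       p1 = concat (take 0 (s # ss)) @ p1 \<and> p2 = d @ concat (drop (Suc 0) (s # ss))"
      using s by simp
    thus ?thesis by blast
  next
    case False
    have "s = take (length s) p1" using eq False by (auto simp: append_eq_append_conv_if split: if_splits)
    then obtain us where p1: "p1 = s @ us" by (metis append_take_drop_id)
    hence "concat ss = us @ w # p2" using eq by simp
    then obtain j a b where h: "j < length ss" "ss!j = a @ w # b" "us = concat (take j ss) @ a"
        "p2 = b @ concat (drop (Suc j) ss)" using Cons.IH by blast
    hence "Suc j < length (s # ss) \<and> (s # ss) ! Suc j = a @ w # b \<and>
       p1 = concat (take (Suc j) (s # ss)) @ a \<and> p2 = b @ concat (drop (Suc (Suc j)) (s # ss))"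
      using p1 by simp
    thus ?thesis by blast
  qed
qed

lemma decI:
  assumes "segs \<noteq> []" "length segs \<le> k + 1" "concat segs = P"
    "\<And>s. s \<in> set segs \<Longrightarrow> s \<noteq> [] \<and> is_sp V E wt s (hd s) (last s)"
    "\<And>i. Suc i < length segs \<Longrightarrow> {last (segs ! i), hd (segs ! Suc i)} \<in> E"
  shows "decomposable V E wt k P"
  using assms unfolding decomposable_def by blast

theorem claim3p2:
  fixes V :: "'v set" and E D :: "'v set set" and wt :: "'v set \<Rightarrow> real"
    and u v w :: 'v and d r :: nat
  assumes "graph V E wt"
    and "unique_sp V E wt" and "unique_sp V (E - D) wt"
    and "u \<in> V" and "v \<in> V"
    and "D \<subseteq> E" and "card D = d"
    and "connected_in V (E - D) u v"
    and "r = rank_GD V E wt D u v"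
    and "w \<in> set (spath V (E - D) wt u v)"
    and "edges_of (spath V E wt u w) \<inter> D \<noteq> {}"
    and "edges_of (spath V E wt w v) \<inter> D \<noteq> {}"
  shows "rank_GD V E wt D u w + 1 \<le> r \<and> rank_GD V E wt D w v + 1 \<le> r"
proof -
  define F where "F = E - D"
  have finV: "finite V" and nnE: "\<forall>e\<in>E. wt e \<ge> 0" using assms(1) unfolding graph_def
    by (auto simp: less_imp_le)
  have nnF: "\<forall>e\<in>F. wt e \<ge> 0" using nnE by (auto simp: F_def)
  obtain P where Psp: "is_sp V F wt P u v" using sp_exists[OF finV] assms(8) F_def by blast
  have Peq: "spath V F wt u v = P" unfolding spath_def
    using Psp assms(3) F_def unfolding unique_sp_def by blast
  have Ppath: "P \<noteq> []" "hd P = u" "last P = v" "distinct P" "set P \<subseteq> V" "edges_of P \<subseteq> F"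
    using Psp unfolding is_sp_def is_path_def by auto
  have "w \<in> set P" using assms(10) Peq F_def by simp
  then obtain p1 p2 where P: "P = p1 @ w # p2" by (meson split_list)
  have spl: "is_sp V F wt (p1@[w]) u w" "is_sp V F wt (w#p2) w v"
    using sp_split[OF _ nnF] Psp P by auto
  have S1: "spath V F wt u w = p1@[w]" unfolding spath_def
    using spl(1) assms(3) F_def unfolding unique_sp_def by blast
  have S2: "spath V F wt w v = w#p2" unfolding spath_def
    using spl(2) assms(3) F_def unfolding unique_sp_def by blast
  have EP: "edges_of P = edges_of (p1@[w]) \<union> edges_of (w#p2)" using P edges_append by metis
  have dec0: "decomposable V E wt (length P) P"
  proof (rule decI[of "map (\<lambda>x. [x]) P"])
    fix s assume "s \<in> set (map (\<lambda>x. [x]) P)"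
    then obtain x where x: "s = [x]" "x \<in> set P" by auto
    have "is_path V E [x] x x" using x Ppath by (auto simp: is_path_def)
    moreover have "plen wt [x] \<le> plen wt q" if "is_path V E q x x" for q
      using plen_nonneg[OF _ nnE] that by (auto simp: is_path_def)
    ultimately show "s \<noteq> [] \<and> is_sp V E wt s (hd s) (last s)" using x by (auto simp: is_sp_def)
  next
    fix i assume "Suc i < length (map (\<lambda>x. [x]) P)"
    hence "{P!i, P!Suc i} \<in> F" using edge_nth Ppath(6) by fastforce
    thus "{last (map (\<lambda>x. [x]) P ! i), hd (map (\<lambda>x. [x]) P ! Suc i)} \<in> E"
      using \<open>Suc i < _\<close> F_def by auto
  qed (use Ppath in auto)
  have rdef: "r = (LEAST i. decomposable V E wt i P)" using assms(9) Peq F_def by (simp add: rank_GD_def)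
  have "decomposable V E wt r P" unfolding rdef by (rule LeastI[of "\<lambda>i. decomposable V E wt i P", OF dec0])
  then obtain segs where sg: "segs \<noteq> []" "length segs \<le> r + 1" "concat segs = P"
    "\<And>s. s\<in>set segs \<Longrightarrow> s \<noteq> [] \<and> is_sp V E wt s (hd s) (last s)"
    "\<And>i. Suc i < length segs \<Longrightarrow> {last (segs ! i), hd (segs ! Suc i)} \<in> E"
    unfolding decomposable_def by blast
  obtain j a b where jab: "j < length segs" "segs!j = a @ w # b"
     "p1 = concat (take j segs) @ a" "p2 = b @ concat (drop (Suc j) segs)"
    using concat_split[of segs p1 w p2] sg(3) P by blast
  have "segs!j \<in> set segs" using jab(1) by simp
  hence "is_sp V E wt (a @ w # b) (hd (a @ w # b)) (last (a @ w # b))" using sg(4) jab(2) by metis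
  hence sj: "is_sp V E wt (a @ [w]) (hd (a @ w # b)) w" "is_sp V E wt (w # b) w (last (w # b))"
    using sp_split[OF _ nnE] by auto
  have hdeq: "hd (a@[w]) = hd (a @ w # b)" by (cases a) auto
  have j1: "j + 1 < length segs"
  proof (rule ccontr)
    assume "\<not> ?thesis"
    hence "drop (Suc j) segs = []" by simp
    hence "p2 = b" using jab(4) by simp
    moreover have "last (w#p2) = v" using Ppath(3) P by simp
    ultimately have "is_sp V E wt (w#p2) w v" using sj(2) by simp
    hence "spath V E wt w v = w#p2" unfolding spath_def
      using assms(2) unfolding unique_sp_def by blast
    thus False using assms(12) EP Ppath(6) F_def by auto
  qed
  have j0: "j > 0"
  proof (rule ccontr)
    assume "\<not> ?thesis"
    hence "p1 = a" using jab(3) by simp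
    moreover have "hd (p1 @ [w]) = u" using Ppath(2) P by (cases p1) auto
    ultimately have "is_sp V E wt (p1@[w]) u w" using sj(1) hdeq by simp
    hence "spath V E wt u w = p1@[w]" unfolding spath_def
      using assms(2) unfolding unique_sp_def by blast
    thus False using assms(11) EP Ppath(6) F_def by auto
  qed
  have d1: "decomposable V E wt j (p1@[w])"
  proof (rule decI[of "take j segs @ [a@[w]]"])
    show "concat (take j segs @ [a @ [w]]) = p1 @ [w]" using jab(3) by simp
    show "length (take j segs @ [a @ [w]]) \<le> j + 1" by simp
  next
    fix s assume "s \<in> set (take j segs @ [a @ [w]])"
    then consider "s \<in> set segs" | "s = a@[w]" by (auto dest: in_set_takeD)
    then show "s \<noteq> [] \<and> is_sp V E wt s (hd s) (last s)"
      by cases (use sg(4) sj(1) hdeq in auto)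
  next
    fix i assume i: "Suc i < length (take j segs @ [a @ [w]])"
    hence ij: "i < j" using jab(1) by simp
    have a1: "(take j segs @ [a @ [w]]) ! i = segs ! i" using ij jab(1) by (simp add: nth_append)
    show "{last ((take j segs @ [a @ [w]]) ! i), hd ((take j segs @ [a @ [w]]) ! Suc i)} \<in> E"
    proof (cases "Suc i < j")
      case True
      hence "(take j segs @ [a @ [w]]) ! Suc i = segs ! Suc i" using jab(1) by (simp add: nth_append)
      thus ?thesis using a1 sg(5)[of i] True jab(1) by simp
    next
      case False
      hence "Suc i = j" using ij by simp
      hence "(take j segs @ [a @ [w]]) ! Suc i = a@[w]" using jab(1) by (simp add: nth_append)
      thus ?thesis using a1 sg(5)[of i] \<open>Suc i = j\<close> jab hdeq by simp
    qed
  qed simp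
  have d2: "decomposable V E wt (length segs - 1 - j) (w#p2)"
  proof (rule decI[of "(w#b) # drop (Suc j) segs"])
    show "concat ((w#b) # drop (Suc j) segs) = w # p2" using jab(4) by simp
    show "length ((w#b) # drop (Suc j) segs) \<le> length segs - 1 - j + 1" using jab(1) by simp
  next
    fix s assume "s \<in> set ((w#b) # drop (Suc j) segs)"
    then consider "s \<in> set segs" | "s = w#b" by (auto dest: in_set_dropD)
    then show "s \<noteq> [] \<and> is_sp V E wt s (hd s) (last s)"
      by cases (use sg(4) sj(2) in auto)
  next
    fix i assume i: "Suc i < length ((w#b) # drop (Suc j) segs)"
    show "{last (((w#b) # drop (Suc j) segs) ! i), hd (((w#b) # drop (Suc j) segs) ! Suc i)} \<in> E"
    proof (cases i)
      case 0
      have "last (w#b) = last (segs!j)" using jab(2) by simp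
      thus ?thesis using 0 sg(5)[of j] j1 by simp
    next
      case (Suc i')
      have "Suc (Suc j + i') < length segs" using i Suc by simp
      thus ?thesis using Suc sg(5)[of "Suc j + i'"] by simp
    qed
  qed simp
  have r1: "rank_GD V E wt D u w \<le> j" unfolding rank_GD_def
    using S1 F_def d1 by (simp add: Least_le)
  have r2: "rank_GD V E wt D w v \<le> length segs - 1 - j" unfolding rank_GD_def
    using S2 F_def d2 by (simp add: Least_le)
  show ?thesis using r1 r2 j0 j1 sg(2) by linarith
qed

end
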